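(* Let $n\ge0$ and $0\le p,q,k\le n$ with $p+q\le n$. Then in $OPol_{n+1}$, $$\sum_{m=1}^{n-p-q}(-1)^{(n+k)(m+p+k)}e^{(n+1)}_{n-k+m}\,e^{(n+1)}_{n-p-q-m}=\sum_{m=1}^{n-p-q}(-1)^{(n+k)(m+q)}e^{(n+1)}_{n-p-q-m}\,e^{(n+1)}_{n-k+m}.$$
   Context: $\Bbbk$ is a field of characteristic $\neq2$. $OPol_N$ is the graded superalgebra generated by odd elements $x_1,\dots,x_N$ of degree 2 subject to $x_jx_i=-x_ix_j$ for $i\neq j$. For $r\ge0$, $e_r^{(N)}:=\sum_{1\le i_1<\dots<i_r\le N}x_{i_1}\cdots x_{i_r}\in OPol_N$ (so $e_0^{(N)}=1$ and $e^{(N)}_r=0$ for $r>N$). *)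

theory Defs
  imports Main
begin

text \<open>The odd polynomial algebra OPol_N over a field: elements are represented by their
coefficient functions on exponent vectors (variables x_0,...,x_{N-1}, i.e. the paper's
x_1,...,x_N shifted by one). A monomial x^a = x_0^{a 0} ... x_{N-1}^{a (N-1)}, and
x^a x^b = (-1)^(sum_{i>j} a_i b_j) x^(a+b), which is forced by x_j x_i = - x_i x_j (i ~= j).\<close>

type_synonym 'a opol = "(nat \<Rightarrow> nat) \<Rightarrow> 'a"

definition opol_monos :: "nat \<Rightarrow> (nat \<Rightarrow> nat) set" where
  "opol_monos N = {a. \<forall>i\<ge>N. a i = 0}"

definition opol_sign :: "nat \<Rightarrow> (nat \<Rightarrow> nat) \<Rightarrow> (nat \<Rightarrow> nat) \<Rightarrow> 'a::field" where
  "opol_sign N a b = (-1) ^ (\<Sum>i<N. \<Sum>j<i. a i * b j)"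

definition opol_mult :: "nat \<Rightarrow> 'a::field opol \<Rightarrow> 'a opol \<Rightarrow> 'a opol" where
  "opol_mult N f g = (\<lambda>c. if c \<in> opol_monos N then
     (\<Sum>a\<in>{a. a \<in> opol_monos N \<and> (\<forall>i. a i \<le> c i)}.
        opol_sign N a (\<lambda>i. c i - a i) * f a * g (\<lambda>i. c i - a i))
     else 0)"

definition opol_one :: "'a::field opol" where
  "opol_one = (\<lambda>a. if a = (\<lambda>_. 0) then 1 else 0)"

definition opol_var :: "nat \<Rightarrow> 'a::field opol" where
  "opol_var i = (\<lambda>a. if a = (\<lambda>j. if j = i then 1 else 0) then 1 else 0)"

fun opol_prodl :: "nat \<Rightarrow> 'a::field opol list \<Rightarrow> 'a opol" where
  "opol_prodl N [] = opol_one"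
| "opol_prodl N (f # fs) = opol_mult N f (opol_prodl N fs)"

definition opol_sum :: "('b \<Rightarrow> 'a::field opol) \<Rightarrow> 'b set \<Rightarrow> 'a opol" where
  "opol_sum F A = (\<lambda>c. \<Sum>x\<in>A. F x c)"

definition opol_smult :: "'a::field \<Rightarrow> 'a opol \<Rightarrow> 'a opol" where
  "opol_smult s f = (\<lambda>c. s * f c)"

definition elem_sym :: "nat \<Rightarrow> nat \<Rightarrow> 'a::field opol" where
  "elem_sym N r = opol_sum
     (\<lambda>S. opol_prodl N (map opol_var (sorted_list_of_set S)))
     {S. S \<subseteq> {..<N} \<and> card S = r}"

end

theory Submission
  imports Defs "HOL-Library.FuncSet"
begin

definition dl :: "(nat \<Rightarrow> nat) \<Rightarrow> 'a::field opol" where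
  "dl a = (\<lambda>c. if c = a then 1 else 0)"

definition ind :: "nat set \<Rightarrow> nat \<Rightarrow> nat" where
  "ind A = (\<lambda>i. if i \<in> A then 1 else 0)"

lemma finite_below:
  "finite {a. a \<in> opol_monos N \<and> (\<forall>i. a i \<le> c i)}"
proof -
  let ?S = "{a. a \<in> opol_monos N \<and> (\<forall>i. a i \<le> c i)}"
  have "?S \<subseteq> (\<lambda>f i. if i < N then f i else 0) ` (PiE {..<N} (\<lambda>i. {..c i}))"
  proof
    fix a assume a: "a \<in> ?S"
    have "a = (\<lambda>i. if i < N then restrict a {..<N} i else 0)"
      using a by (auto simp: opol_monos_def)
    moreover have "restrict a {..<N} \<in> PiE {..<N} (\<lambda>i. {..c i})" using a by auto
    ultimately show "a \<in> (\<lambda>f i. if i < N then f i else 0) ` (PiE {..<N} (\<lambda>i. {..c i}))"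
      by blast
  qed
  moreover have "finite (PiE {..<N} (\<lambda>i. {..c i}))" by (rule finite_PiE) auto
  ultimately show ?thesis by (meson finite_imageI finite_subset)
qed

lemma mult_sum_left:
  "opol_mult N (opol_sum F X) g = opol_sum (\<lambda>x. opol_mult N (F x) g) X"
  unfolding opol_mult_def opol_sum_def
  by (rule ext) (auto simp: sum_distrib_left sum_distrib_right mult.assoc intro: sum.swap)

lemma mult_sum_right:
  "opol_mult N f (opol_sum F X) = opol_sum (\<lambda>x. opol_mult N f (F x)) X"
  unfolding opol_mult_def opol_sum_def
  apply (rule ext)
  apply (auto simp: sum_distrib_left sum_distrib_right mult.assoc)
  apply (subst sum.swap) apply (rule sum.cong) apply simp
  apply (rule sum.cong) apply simp by (simp add: algebra_simps)

lemma mult_dl: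
  assumes "a \<in> opol_monos N" "b \<in> opol_monos N"
  shows "opol_mult N (dl a) (dl b) = (\<lambda>c. if c = (\<lambda>i. a i + b i) then opol_sign N a b else (0::'a::field))"
proof (rule ext)
  fix c
  let ?S = "{a. a \<in> opol_monos N \<and> (\<forall>i. a i \<le> c i)}"
  have "(\<Sum>a'\<in>?S. opol_sign N a' (\<lambda>i. c i - a' i) * dl a a' * dl b (\<lambda>i. c i - a' i))
      = (\<Sum>a'\<in>?S. if a' = a then opol_sign N a (\<lambda>i. c i - a i) * dl b (\<lambda>i. c i - a i) else (0::'a))"
    by (rule sum.cong) (auto simp: dl_def)
  also have "\<dots> = (if a \<in> ?S then opol_sign N a (\<lambda>i. c i - a i) * dl b (\<lambda>i. c i - a i) else 0)"
    using finite_below by (simp add: sum.delta')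
  finally have eq: "(\<Sum>a'\<in>?S. opol_sign N a' (\<lambda>i. c i - a' i) * dl a a' * dl b (\<lambda>i. c i - a' i))
     = (if a \<in> ?S then opol_sign N a (\<lambda>i. c i - a i) * dl b (\<lambda>i. c i - a i) else (0::'a))" .
  have m: "opol_mult N (dl a) (dl b) c = (if c \<in> opol_monos N then
     (\<Sum>a'\<in>?S. opol_sign N a' (\<lambda>i. c i - a' i) * dl a a' * dl b (\<lambda>i. c i - a' i)) else (0::'a))"
    unfolding opol_mult_def by (rule refl)
  show "opol_mult N (dl a) (dl b) c = (if c = (\<lambda>i. a i + b i) then opol_sign N a b else (0::'a))"
  proof (cases "c = (\<lambda>i. a i + b i)")
    case True
    have "c \<in> opol_monos N" using assms True by (auto simp: opol_monos_def)
    moreover have "(\<lambda>i. c i - a i) = b" using True by auto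
    moreover have "a \<in> ?S" using True assms by auto
    ultimately have "opol_mult N (dl a) (dl b) c = (opol_sign N a (\<lambda>i. c i - a i) * dl b (\<lambda>i. c i - a i) :: 'a)"
      using m eq by simp
    then show ?thesis using True \<open>(\<lambda>i. c i - a i) = b\<close> by (simp add: dl_def)
  next
    case False
    have "\<not> (a \<in> ?S \<and> (\<lambda>i. c i - a i) = b)"
    proof
      assume h: "a \<in> ?S \<and> (\<lambda>i. c i - a i) = b"
      have "c = (\<lambda>i. a i + b i)"
      proof
        fix i show "c i = a i + b i" using h fun_cong[OF conjunct2[OF h], of i] by force
      qed
      with False show False by simp
    qed
    then have "(if a \<in> ?S then opol_sign N a (\<lambda>i. c i - a i) * dl b (\<lambda>i. c i - a i) else (0::'a)) = 0"
      by (auto simp: dl_def)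
    then show ?thesis using m eq False by simp
  qed
qed


lemma ind_monos: "A \<subseteq> {..<N} \<Longrightarrow> ind A \<in> opol_monos N"
  by (auto simp: ind_def opol_monos_def)

lemma prodl_sorted:
  "sorted_wrt (<) xs \<Longrightarrow> set xs \<subseteq> {..<N} \<Longrightarrow>
   opol_prodl N (map opol_var xs) = (dl (ind (set xs)) :: 'a::field opol)"
proof (induction xs)
  case Nil
  show ?case by (simp add: opol_one_def dl_def ind_def)
next
  case (Cons x xs)
  have IH: "opol_prodl N (map opol_var xs) = (dl (ind (set xs)) :: 'a opol)"
    using Cons by auto
  have v: "(opol_var x :: 'a opol) = dl (ind {x})"
    by (rule ext) (simp add: opol_var_def dl_def ind_def)
  have lt: "\<And>y. y \<in> set xs \<Longrightarrow> x < y" using Cons.prems by auto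
  have sg: "opol_sign N (ind {x}) (ind (set xs)) = (1::'a)"
  proof -
    have "(\<Sum>i<N. \<Sum>j<i. ind {x} i * ind (set xs) j) = 0"
      apply (rule sum.neutral, rule ballI, rule sum.neutral, rule ballI)
      using lt by (auto simp: ind_def) (meson less_asym)
    then show ?thesis by (simp only: opol_sign_def) simp
  qed
  have add: "(\<lambda>i. ind {x} i + ind (set xs) i) = ind (set (x # xs))"
    using lt by (auto simp: ind_def intro!: ext) (meson less_irrefl)
  have "opol_prodl N (map opol_var (x#xs)) = opol_mult N (dl (ind {x})) (dl (ind (set xs)) :: 'a opol)"
    by (simp add: IH v)
  also have "\<dots> = (\<lambda>c. if c = ind (set (x#xs)) then opol_sign N (ind {x}) (ind (set xs)) else 0)"
    using Cons.prems by (subst mult_dl) (auto simp: ind_monos add)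
  also have "\<dots> = dl (ind (set (x#xs)))" unfolding sg by (simp add: dl_def)
  finally show ?case .
qed

lemma prodl_set:
  "S \<subseteq> {..<N} \<Longrightarrow>
   opol_prodl N (map opol_var (sorted_list_of_set S)) = (dl (ind S) :: 'a::field opol)"
proof -
  assume S: "S \<subseteq> {..<N}"
  then have f: "finite S" using finite_subset by blast
  show ?thesis
    using prodl_sorted[of "sorted_list_of_set S" N] S f
    by (simp add: strict_sorted_list_of_set)
qed

definition Xs :: "nat \<Rightarrow> nat \<Rightarrow> nat set set" where
  "Xs N r = {S. S \<subseteq> {..<N} \<and> card S = r}"

lemma elem_sym_dl: "elem_sym N r = opol_sum (\<lambda>S. dl (ind S)) (Xs N r)"
  unfolding elem_sym_def Xs_def opol_sum_def
  by (rule ext, rule sum.cong) (auto simp: prodl_set)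

definition invc :: "nat set \<Rightarrow> nat set \<Rightarrow> nat" where
  "invc A B = card {(i,j). i \<in> A \<and> j \<in> B \<and> j < i}"

lemma sign_ind:
  assumes "A \<subseteq> {..<N}" "finite B"
  shows "opol_sign N (ind A) (ind B) = ((-1::'a::field) ^ invc A B)"
proof -
  have "(\<Sum>i<N. \<Sum>j<i. ind A i * ind B j) = (\<Sum>i<N. if i \<in> A then card {j\<in>B. j < i} else 0)"
  proof (rule sum.cong)
    fix i
    have "(\<Sum>j<i. ind B j) = card {j\<in>B. j < i}"
    proof -
      have "(\<Sum>j<i. ind B j) = (\<Sum>j\<in>{..<i}. if j \<in> B then 1 else 0)" by (simp add: ind_def)
      also have "\<dots> = card ({..<i} \<inter> B)" by (simp add: sum.If_cases)
      also have "{..<i} \<inter> B = {j\<in>B. j < i}" by auto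
      finally show ?thesis .
    qed
    then show "(\<Sum>j<i. ind A i * ind B j) = (if i \<in> A then card {j\<in>B. j < i} else 0)"
      by (simp add: ind_def)
  qed simp
  also have "\<dots> = (\<Sum>i\<in>A. card {j\<in>B. j < i})"
    using assms(1) by (simp add: sum.If_cases Int_absorb1 Int_absorb2)
  also have "\<dots> = card (Sigma A (\<lambda>i. {j\<in>B. j < i}))"
    using assms finite_subset by (subst card_SigmaI) auto
  also have "Sigma A (\<lambda>i. {j\<in>B. j < i}) = {(i,j). i \<in> A \<and> j \<in> B \<and> j < i}" by auto
  finally show ?thesis by (simp add: opol_sign_def invc_def)
qed

definition P :: "nat \<Rightarrow> nat \<Rightarrow> nat \<Rightarrow> (nat \<Rightarrow> nat) \<Rightarrow> 'a::field" where
  "P N r s c = (\<Sum>A\<in>Xs N r. \<Sum>B\<in>Xs N s.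
      if c = (\<lambda>i. ind A i + ind B i) then (-1) ^ invc A B else 0)"

lemma mult_elem: "opol_mult N (elem_sym N r) (elem_sym N s) = (\<lambda>c. (P N r s c :: 'a::field))"
proof -
  have "opol_mult N (elem_sym N r) (elem_sym N s) =
    opol_sum (\<lambda>A. opol_sum (\<lambda>B. opol_mult N (dl (ind A)) (dl (ind B))) (Xs N s)) (Xs N r)"
    by (simp only: elem_sym_dl[of N r] mult_sum_left) (simp only: elem_sym_dl mult_sum_right)
  also have "\<dots> = (\<lambda>c. (P N r s c :: 'a))"
    unfolding opol_sum_def P_def
  proof (rule ext, rule sum.cong[OF refl], rule sum.cong[OF refl])
    fix c A B assume A: "A \<in> Xs N r" and B: "B \<in> Xs N s"
    have fB: "finite B" using B finite_subset by (auto simp: Xs_def)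
    show "opol_mult N (dl (ind A)) (dl (ind B)) c =
      (if c = (\<lambda>i. ind A i + ind B i) then (- 1) ^ invc A B else (0::'a))"
      using A B fB by (simp add: mult_dl ind_monos Xs_def sign_ind)
  qed
  finally show ?thesis .
qed

lemma neg1_split: "a + b = (c::nat) \<Longrightarrow> (-1::'a::ring_1)^a = (-1)^c * (-1)^b"
proof -
  assume "a + b = c"
  then have "(-1::'a)^c * (-1)^b = (-1)^a * ((-1)^b * (-1)^b)" by (auto simp: power_add algebra_simps)
  also have "(-1::'a)^b * (-1)^b = 1" by (simp flip: power_add)
  finally show ?thesis by simp
qed

lemma invc_swap:
  assumes "finite A" "finite B"
  shows "invc A B + invc B A + card (A \<inter> B) = card A * card B"
proof -
  let ?S1 = "{(i,j). i \<in> A \<and> j \<in> B \<and> j < i}"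
  let ?S2 = "{(i,j). i \<in> A \<and> j \<in> B \<and> i < j}"
  let ?S3 = "{(i,j). i \<in> A \<and> j \<in> B \<and> i = j}"
  have AB: "A \<times> B = ?S1 \<union> ?S2 \<union> ?S3" by auto
  have fin: "finite (A \<times> B)" using assms by auto
  have f1: "finite ?S1" "finite ?S2" "finite ?S3" using fin by (auto intro: finite_subset[OF _ fin])
  have "card (A \<times> B) = card ?S1 + card ?S2 + card ?S3"
    unfolding AB using f1 by (subst card_Un_disjoint, auto)+
  moreover have "card ?S2 = invc B A"
  proof -
    have "?S2 = (\<lambda>(a,b). (b,a)) ` {(i,j). i \<in> B \<and> j \<in> A \<and> j < i}" by auto
    moreover have "inj_on (\<lambda>(a,b). (b,a)) {(i,j). i \<in> B \<and> j \<in> A \<and> j < i}"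
      by (auto simp: inj_on_def)
    ultimately show ?thesis unfolding invc_def by (simp add: card_image)
  qed
  moreover have "card ?S3 = card (A \<inter> B)"
  proof -
    have "?S3 = (\<lambda>i. (i,i)) ` (A \<inter> B)" by auto
    moreover have "inj_on (\<lambda>i. (i,i)) (A \<inter> B)" by (auto simp: inj_on_def)
    ultimately show ?thesis by (simp add: card_image)
  qed
  ultimately show ?thesis by (simp add: invc_def card_cartesian_product)
qed

lemma ind_add_inter:
  "c = (\<lambda>i. ind A i + ind B i) \<Longrightarrow> {i. c i = 2} = A \<inter> B"
  by (auto simp: ind_def split: if_splits)

lemma P_swap:
  "P N s r c = ((-1::'a::field) ^ (r * s + card {i. c i = 2})) * P N r s c"
proof -
  have "P N s r c = (\<Sum>A\<in>Xs N r. \<Sum>B\<in>Xs N s.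
      if c = (\<lambda>i. ind B i + ind A i) then (-1::'a) ^ invc B A else 0)"
    unfolding P_def by (rule sum.swap)
  also have "\<dots> = (\<Sum>A\<in>Xs N r. \<Sum>B\<in>Xs N s. (-1::'a) ^ (r * s + card {i. c i = 2}) *
      (if c = (\<lambda>i. ind A i + ind B i) then (-1::'a) ^ invc A B else 0))"
  proof (rule sum.cong[OF refl], rule sum.cong[OF refl])
    fix A B assume A: "A \<in> Xs N r" and B: "B \<in> Xs N s"
    have fA: "finite A" and fB: "finite B" using A B finite_subset by (auto simp: Xs_def)
    show "(if c = (\<lambda>i. ind B i + ind A i) then (-1::'a) ^ invc B A else 0) =
      (-1) ^ (r * s + card {i. c i = 2}) * (if c = (\<lambda>i. ind A i + ind B i) then (-1) ^ invc A B else 0)"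
    proof (cases "c = (\<lambda>i. ind A i + ind B i)")
      case True
      then have c2: "card {i. c i = 2} = card (A \<inter> B)" using ind_add_inter by simp
      have cB: "c = (\<lambda>i. ind B i + ind A i)" using True by (auto simp: add.commute)
      have "invc B A + (invc A B + card (A \<inter> B)) = r * s"
        using invc_swap[OF fA fB] A B by (simp add: Xs_def)
      then have "(-1::'a) ^ invc B A = (-1) ^ (r * s) * (-1) ^ (invc A B + card (A \<inter> B))"
        by (rule neg1_split)
      then show ?thesis using True cB c2 by (simp add: power_add algebra_simps)
    next
      case False
      then have "c \<noteq> (\<lambda>i. ind B i + ind A i)" by (auto simp: add.commute)
      then show ?thesis using False by simp
    qed
  qed
  also have "\<dots> = (-1::'a) ^ (r * s + card {i. c i = 2}) * P N r s c"
    unfolding P_def by (simp add: sum_distrib_left)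
  finally show ?thesis .
qed

lemma invc_insert_left:
  assumes "finite A" "finite B" "x \<notin> A"
  shows "invc (insert x A) B = invc A B + card {j\<in>B. j < x}"
proof -
  have eq: "{(i,j). i \<in> insert x A \<and> j \<in> B \<and> j < i} =
    {(i,j). i \<in> A \<and> j \<in> B \<and> j < i} \<union> (\<lambda>j. (x,j)) ` {j\<in>B. j < x}" by auto
  have f: "finite {(i,j). i \<in> A \<and> j \<in> B \<and> j < i}"
    by (rule finite_subset[of _ "A \<times> B"]) (use assms in auto)
  have "card ({(i,j). i \<in> A \<and> j \<in> B \<and> j < i} \<union> (\<lambda>j. (x,j)) ` {j\<in>B. j < x})
     = card {(i,j). i \<in> A \<and> j \<in> B \<and> j < i} + card ((\<lambda>j. (x,j)) ` {j\<in>B. j < x})"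
    by (rule card_Un_disjoint) (use f assms in auto)
  moreover have "card ((\<lambda>j. (x,j)) ` {j\<in>B. j < x}) = card {j\<in>B. j < x}"
    by (rule card_image) (auto simp: inj_on_def)
  ultimately show ?thesis unfolding invc_def eq by simp
qed

lemma invc_insert_right:
  assumes "\<forall>i\<in>A. i \<le> x"
  shows "invc A (insert x B) = invc A B"
proof -
  have "{(i,j). i \<in> A \<and> j \<in> insert x B \<and> j < i} = {(i,j). i \<in> A \<and> j \<in> B \<and> j < i}"
    using assms by auto
  then show ?thesis unfolding invc_def by simp
qed

definition G :: "nat set \<Rightarrow> nat set \<Rightarrow> nat \<Rightarrow> 'a::field" where
  "G T U j = (\<Sum>A'\<in>{A'. A' \<subseteq> U \<and> card A' = j}. (-1) ^ invc (T \<union> A') (T \<union> (U - A')))"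

lemma G_big:
  assumes "finite U" "card U < j"
  shows "G T U j = 0"
proof -
  have e: "{A'. A' \<subseteq> U \<and> card A' = j} = {}"
  proof (rule ccontr)
    assume "{A'. A' \<subseteq> U \<and> card A' = j} \<noteq> {}"
    then obtain A' where "A' \<subseteq> U" "card A' = j" by blast
    then show False using card_mono[OF assms(1), of A'] assms(2) by simp
  qed
  show ?thesis unfolding G_def e by simp
qed

lemma G_T:
  assumes "finite T" "finite U" "T \<inter> U = {}" "\<forall>y\<in>T \<union> U. y < x"
  shows "G (insert x T) U j = ((-1::'a::field) ^ (card T + (card U - j))) * G T U j"
  unfolding G_def sum_distrib_left
proof (rule sum.cong[OF refl])
  fix A' assume "A' \<in> {A'. A' \<subseteq> U \<and> card A' = j}"
  then have A': "A' \<subseteq> U" "card A' = j" by auto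
  have fA: "finite A'" using A' assms finite_subset by blast
  have lt: "\<And>y. y \<in> T \<union> U \<Longrightarrow> y < x" using assms by auto
  have "invc (insert x T \<union> A') (insert x T \<union> (U - A')) = invc (insert x (T \<union> A')) (insert x (T \<union> (U - A')))"
    by simp
  also have "\<dots> = invc (insert x (T \<union> A')) (T \<union> (U - A'))"
    by (rule invc_insert_right) (use lt A' in \<open>auto intro!: less_imp_le lt\<close>)
  also have "\<dots> = invc (T \<union> A') (T \<union> (U - A')) + card {y \<in> T \<union> (U - A'). y < x}"
    by (rule invc_insert_left) (use assms A' fA in auto)
  also have "{y \<in> T \<union> (U - A'). y < x} = T \<union> (U - A')" using assms by auto
  also have "card (T \<union> (U - A')) = card T + (card U - j)"
    using assms A' fA by (simp add: card_Un_disjoint card_Diff_subset disjoint_iff)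
  finally show "(-1::'a) ^ invc (insert x T \<union> A') (insert x T \<union> (U - A')) =
      (-1) ^ (card T + (card U - j)) * (-1) ^ invc (T \<union> A') (T \<union> (U - A'))"
    by (simp add: power_add algebra_simps)
qed

lemma subsets_zero: "finite U \<Longrightarrow> {A'. A' \<subseteq> U \<and> card A' = 0} = {{}}"
proof (rule set_eqI, rule iffI)
  fix A' assume "finite U" "A' \<in> {A'. A' \<subseteq> U \<and> card A' = 0}"
  then have "finite A'" "card A' = 0" using finite_subset by auto
  then show "A' \<in> {{}}" by simp
qed auto

lemma G_U0:
  assumes "finite T" "finite U" "\<forall>y\<in>T. y < x"
  shows "G T (insert x U) 0 = (G T U 0 :: 'a::field)"
proof -
  have "invc T (insert x (T \<union> U)) = invc T (T \<union> U)"
    by (rule invc_insert_right) (use assms in \<open>auto intro: less_imp_le\<close>)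
  then show ?thesis using assms by (simp add: G_def subsets_zero)
qed

lemma subsets_insert:
  assumes "finite U" "x \<notin> U"
  shows "{A'. A' \<subseteq> insert x U \<and> card A' = Suc j} =
    {A'. A' \<subseteq> U \<and> card A' = Suc j} \<union> insert x ` {A'. A' \<subseteq> U \<and> card A' = j}"
proof (rule set_eqI, rule iffI)
  fix A' assume "A' \<in> {A'. A' \<subseteq> insert x U \<and> card A' = Suc j}"
  then have A': "A' \<subseteq> insert x U" "card A' = Suc j" by auto
  have fA: "finite A'" using A' assms finite_subset by blast
  show "A' \<in> {A'. A' \<subseteq> U \<and> card A' = Suc j} \<union> insert x ` {A'. A' \<subseteq> U \<and> card A' = j}"
  proof (cases "x \<in> A'")
    case True
    then have "A' = insert x (A' - {x})" by auto
    moreover have "A' - {x} \<subseteq> U" "card (A' - {x}) = j" using A' True fA by auto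
    ultimately show ?thesis by blast
  next
    case False
    then show ?thesis using A' by auto
  qed
next
  fix A' assume "A' \<in> {A'. A' \<subseteq> U \<and> card A' = Suc j} \<union> insert x ` {A'. A' \<subseteq> U \<and> card A' = j}"
  then show "A' \<in> {A'. A' \<subseteq> insert x U \<and> card A' = Suc j}"
  proof
    assume "A' \<in> {A'. A' \<subseteq> U \<and> card A' = Suc j}" then show ?thesis by auto
  next
    assume "A' \<in> insert x ` {A'. A' \<subseteq> U \<and> card A' = j}"
    then obtain A0 where "A0 \<subseteq> U" "card A0 = j" "A' = insert x A0" by auto
    moreover have "finite A0" using \<open>A0 \<subseteq> U\<close> assms finite_subset by blast
    moreover have "x \<notin> A0" using \<open>A0 \<subseteq> U\<close> assms by blast
    ultimately show ?thesis by auto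
  qed
qed

lemma fin_subsets: "finite U \<Longrightarrow> finite {A'. A' \<subseteq> U \<and> card A' = k}"
  by (rule finite_subset[of _ "Pow U"]) auto

lemma G_U:
  assumes "finite T" "finite U" "T \<inter> U = {}" "\<forall>y\<in>T \<union> U. y < x"
  shows "G T (insert x U) (Suc j) = G T U (Suc j) + ((-1::'a::field) ^ (card T + (card U - j))) * G T U j"
proof -
  have xU: "x \<notin> U" "x \<notin> T" using assms by auto
  let ?f = "\<lambda>A'. (-1::'a) ^ invc (T \<union> A') (T \<union> (insert x U - A'))"
  have "G T (insert x U) (Suc j) = sum ?f ({A'. A' \<subseteq> U \<and> card A' = Suc j} \<union> insert x ` {A'. A' \<subseteq> U \<and> card A' = j})"
    unfolding G_def using subsets_insert[OF assms(2) xU(1)] by simp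
  also have "\<dots> = sum ?f {A'. A' \<subseteq> U \<and> card A' = Suc j} + sum ?f (insert x ` {A'. A' \<subseteq> U \<and> card A' = j})"
  proof (rule sum.union_disjoint)
    show "finite {A'. A' \<subseteq> U \<and> card A' = Suc j}" using assms(2) by (rule fin_subsets)
    show "finite (insert x ` {A'. A' \<subseteq> U \<and> card A' = j})" using fin_subsets[OF assms(2)] by blast
    show "{A'. A' \<subseteq> U \<and> card A' = Suc j} \<inter> insert x ` {A'. A' \<subseteq> U \<and> card A' = j} = {}"
      using xU by blast
  qed
  also have "sum ?f {A'. A' \<subseteq> U \<and> card A' = Suc j} = G T U (Suc j)"
    unfolding G_def
  proof (rule sum.cong[OF refl])
    fix A' assume "A' \<in> {A'. A' \<subseteq> U \<and> card A' = Suc j}"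
    then have A': "A' \<subseteq> U" by auto
    have "T \<union> (insert x U - A') = insert x (T \<union> (U - A'))" using A' xU by auto
    moreover have "invc (T \<union> A') (insert x (T \<union> (U - A'))) = invc (T \<union> A') (T \<union> (U - A'))"
      by (rule invc_insert_right) (use A' assms in \<open>auto intro: less_imp_le\<close>)
    ultimately show "?f A' = (-1) ^ invc (T \<union> A') (T \<union> (U - A'))" by simp
  qed
  also have "sum ?f (insert x ` {A'. A' \<subseteq> U \<and> card A' = j}) = sum (?f \<circ> insert x) {A'. A' \<subseteq> U \<and> card A' = j}"
    by (rule sum.reindex) (use xU in \<open>auto simp: inj_on_def\<close>)
  also have "\<dots> = ((-1::'a) ^ (card T + (card U - j))) * G T U j"
    unfolding G_def sum_distrib_left
  proof (rule sum.cong[OF refl])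
    fix A0 assume "A0 \<in> {A'. A' \<subseteq> U \<and> card A' = j}"
    then have A0: "A0 \<subseteq> U" "card A0 = j" by auto
    have fA: "finite A0" using A0 assms finite_subset by blast
    have e1: "T \<union> insert x A0 = insert x (T \<union> A0)" by auto
    have e2: "insert x U - insert x A0 = U - A0" using xU by auto
    have "invc (insert x (T \<union> A0)) (T \<union> (U - A0)) = invc (T \<union> A0) (T \<union> (U - A0)) + card {y \<in> T \<union> (U - A0). y < x}"
      by (rule invc_insert_left) (use assms A0 fA xU in auto)
    also have "{y \<in> T \<union> (U - A0). y < x} = T \<union> (U - A0)" using assms by auto
    also have "card (T \<union> (U - A0)) = card T + (card U - j)"
      using assms A0 fA by (simp add: card_Un_disjoint card_Diff_subset disjoint_iff)
    finally have "invc (insert x (T \<union> A0)) (T \<union> (U - A0)) = invc (T \<union> A0) (T \<union> (U - A0)) + (card T + (card U - j))" .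
    then show "(?f \<circ> insert x) A0 = (-1) ^ (card T + (card U - j)) * (-1) ^ invc (T \<union> A0) (T \<union> (U - A0))"
      by (simp add: e1 e2 power_add algebra_simps)
  qed
  finally show ?thesis .
qed

lemma neg1_par: "even a = even b \<Longrightarrow> (-1::'a::ring_1)^a = (-1)^b"
  by (simp add: minus_one_power_iff)

definition claims :: "nat set \<Rightarrow> nat set \<Rightarrow> 'a::field itself \<Rightarrow> bool" where
  "claims T U (X::'a itself) \<longleftrightarrow>
    (even (card U) \<longrightarrow> (\<forall>i. (G T U (Suc (2*i)) :: 'a) = 0)) \<and>
    (odd (card U) \<longrightarrow> (\<forall>i. (G T U (Suc (2*i)) :: 'a) = (-1)^(card T) * G T U (2*i)))"

lemma claims_T:
  assumes "finite T" "finite U" "T \<inter> U = {}" "\<forall>y\<in>T \<union> U. y < x"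
    and IH: "claims T U (TYPE('a::field))"
  shows "claims (insert x T) U (TYPE('a))"
proof -
  have xT: "x \<notin> T" using assms by auto
  have GT: "\<And>j. (G (insert x T) U j :: 'a) = (-1) ^ (card T + (card U - j)) * G T U j"
    by (rule G_T[OF assms(1-4)])
  have cT: "card (insert x T) = Suc (card T)" using xT assms by simp
  show ?thesis unfolding claims_def
  proof (intro conjI impI allI)
    fix i assume "even (card U)"
    then show "(G (insert x T) U (Suc (2*i)) :: 'a) = 0" using IH GT by (simp add: claims_def)
  next
    fix i assume ou: "odd (card U)"
    have g1: "(G T U (Suc (2*i)) :: 'a) = (-1)^(card T) * G T U (2*i)" using IH ou by (simp add: claims_def)
    show "(G (insert x T) U (Suc (2*i)) :: 'a) = (-1)^(card (insert x T)) * G (insert x T) U (2*i)"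
    proof (cases "Suc (2*i) \<le> card U")
      case True
      have E: "(-1::'a) ^ (card T + (card U - Suc (2*i))) * (-1)^(card T) =
            (-1)^(Suc (card T)) * (-1) ^ (card T + (card U - 2*i))"
        unfolding power_add[symmetric] by (rule neg1_par) (use True in presburger)
      have "(-1::'a) ^ (card T + (card U - Suc (2*i))) * ((-1)^(card T) * G T U (2*i)) =
            (-1)^(Suc (card T)) * ((-1) ^ (card T + (card U - 2*i)) * G T U (2*i))"
        using arg_cong[OF E, of "\<lambda>z. z * G T U (2*i)"] by (simp only: mult.assoc)
      then show ?thesis unfolding GT cT g1 .
    next
      case False
      then have "card U < 2*i" using ou by presburger
      then have z1: "(G T U (2*i) :: 'a) = 0" by (intro G_big[OF assms(2)])
      have z2: "(G T U (Suc (2*i)) :: 'a) = 0" using \<open>card U < 2*i\<close> by (intro G_big[OF assms(2)]) simp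
      show ?thesis unfolding GT z1 z2 by simp
    qed
  qed
qed

lemma claims_U:
  assumes "finite T" "finite U" "T \<inter> U = {}" "\<forall>y\<in>T \<union> U. y < x"
    and IH: "claims T U (TYPE('a::field))"
  shows "claims T (insert x U) (TYPE('a))"
proof -
  have xU: "x \<notin> U" using assms by auto
  have GU: "\<And>j. (G T (insert x U) (Suc j) :: 'a) = G T U (Suc j) + (-1) ^ (card T + (card U - j)) * G T U j"
    by (rule G_U[OF assms(1-4)])
  have GU0: "(G T (insert x U) 0 :: 'a) = G T U 0"
    by (rule G_U0[OF assms(1,2)]) (use assms(4) in auto)
  have cU: "card (insert x U) = Suc (card U)" using xU assms by simp
  show ?thesis unfolding claims_def cU
  proof (intro conjI impI allI)
    fix i assume ev: "even (Suc (card U))"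
    then have ou: "odd (card U)" by simp
    have g1: "(G T U (Suc (2*i)) :: 'a) = (-1)^(card T) * G T U (2*i)" using IH ou by (simp add: claims_def)
    show "(G T (insert x U) (Suc (2*i)) :: 'a) = 0"
    proof (cases "2*i \<le> card U")
      case True
      have "(-1::'a) ^ (card T + (card U - 2*i)) = (-1)^(Suc (card T))"
        by (rule neg1_par) (use True ou in presburger)
      then have "(-1::'a) ^ (card T + (card U - 2*i)) = - ((-1)^(card T))" by simp
      then show ?thesis unfolding GU g1 by simp
    next
      case False
      then have z1: "(G T U (2*i) :: 'a) = 0" by (intro G_big[OF assms(2)]) simp
      have z2: "(G T U (Suc (2*i)) :: 'a) = 0" using False by (intro G_big[OF assms(2)]) simp
      show ?thesis unfolding GU z1 z2 by simp
    qed
  next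
    fix i assume od: "odd (Suc (card U))"
    then have eu: "even (card U)" by simp
    have g1: "(G T U (Suc (2*i)) :: 'a) = 0" using IH eu by (simp add: claims_def)
    have g2: "(G T (insert x U) (2*i) :: 'a) = G T U (2*i)"
    proof (cases i)
      case 0 then show ?thesis using GU0 by simp
    next
      case (Suc k)
      then have e: "2*i = Suc (Suc (2*k))" by simp
      have z: "(G T U (Suc (2*k)) :: 'a) = 0" using IH eu by (simp add: claims_def)
      show ?thesis unfolding e GU z by simp
    qed
    show "(G T (insert x U) (Suc (2*i)) :: 'a) = (-1)^(card T) * G T (insert x U) (2*i)"
    proof (cases "2*i \<le> card U")
      case True
      have "(-1::'a) ^ (card T + (card U - 2*i)) = (-1)^(card T)"
        by (rule neg1_par) (use True eu in presburger)
      then show ?thesis unfolding GU g1 g2 by simp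
    next
      case False
      then have "(G T U (2*i) :: 'a) = 0"
        by (intro G_big[OF assms(2)]) simp
      then show ?thesis unfolding GU g1 g2 by simp
    qed
  qed
qed

lemma G_claims:
  assumes "finite S"
  shows "\<forall>T U. T \<union> U = S \<longrightarrow> T \<inter> U = {} \<longrightarrow> claims T U (TYPE('a::field))"
  using assms
proof (induction S rule: finite_linorder_max_induct)
  case empty
  show ?case by (auto simp: claims_def G_big)
next
  case (insert b A)
  show ?case
  proof (intro allI impI)
    fix T U assume TU: "T \<union> U = insert b A" "T \<inter> U = {}"
    have bA: "b \<notin> A" using insert.hyps(2) by auto
    have fS: "finite (T \<union> U)" using TU insert(1) by simp
    have fT: "finite T" and fU: "finite U" using fS by auto
    consider (inT) "b \<in> T" | (inU) "b \<in> U" using TU by blast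
    then show "claims T U (TYPE('a))"
    proof cases
      case inT
      have bU: "b \<notin> U" using inT TU by blast
      have e: "T = insert b (T - {b})" using inT by blast
      have A: "(T - {b}) \<union> U = A" using TU bA bU by blast
      have c0: "claims (T - {b}) U (TYPE('a))" using insert.IH A TU(2) by blast
      have lt: "\<forall>y\<in>(T - {b}) \<union> U. y < b" using A insert.hyps(2) by simp
      have "claims (insert b (T - {b})) U (TYPE('a))"
        by (rule claims_T[OF _ fU _ lt c0]) (use fT TU(2) in auto)
      moreover have "insert b (T - {b}) = T" using inT by blast
      ultimately show ?thesis by (simp only:)
    next
      case inU
      have bT: "b \<notin> T" using inU TU by blast
      have e: "U = insert b (U - {b})" using inU by blast
      have A: "T \<union> (U - {b}) = A"
      proof -
        have "T \<union> (U - {b}) = (T \<union> U) - {b}" using bT by blast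
        then show ?thesis using TU(1) bA by simp
      qed
      have c0: "claims T (U - {b}) (TYPE('a))" using insert.IH A TU(2) by blast
      have lt: "\<forall>y\<in>T \<union> (U - {b}). y < b" using A insert.hyps(2) by simp
      have fU': "finite (U - {b})" using fU by simp
      have dj: "T \<inter> (U - {b}) = {}" using TU(2) by blast
      have "claims T (insert b (U - {b})) (TYPE('a))"
        using claims_U[OF fT fU' dj lt c0] .
      moreover have "insert b (U - {b}) = U" using inU by blast
      ultimately show ?thesis by (simp only:)
    qed
  qed
qed

definition Tc :: "(nat \<Rightarrow> nat) \<Rightarrow> nat set" where "Tc c = {i. c i = 2}"
definition Uc :: "(nat \<Rightarrow> nat) \<Rightarrow> nat set" where "Uc c = {i. c i = 1}"
definition valid :: "nat \<Rightarrow> (nat \<Rightarrow> nat) \<Rightarrow> bool" where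
  "valid N c \<longleftrightarrow> c \<in> opol_monos N \<and> (\<forall>i. c i \<le> 2)"

lemma valid_sub: "valid N c \<Longrightarrow> Tc c \<subseteq> {..<N} \<and> Uc c \<subseteq> {..<N}"
proof -
  assume "valid N c"
  then have z: "\<forall>i\<ge>N. c i = 0" unfolding valid_def opol_monos_def by simp
  have "\<forall>i. c i \<noteq> 0 \<longrightarrow> i < N"
  proof (intro allI impI)
    fix i assume "c i \<noteq> 0"
    show "i < N"
    proof (rule ccontr)
      assume "\<not> i < N" then have "c i = 0" using z by simp
      with \<open>c i \<noteq> 0\<close> show False by simp
    qed
  qed
  then show ?thesis unfolding Tc_def Uc_def by auto
qed

lemma TU_disj: "Tc c \<inter> Uc c = {}" by (auto simp: Tc_def Uc_def)

lemma K1: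
  assumes "c = (\<lambda>i. ind A i + ind B i)" "A \<subseteq> {..<N}" "B \<subseteq> {..<N}"
  shows "valid N c \<and> Tc c \<subseteq> A \<and> A \<subseteq> Tc c \<union> Uc c \<and> B = Tc c \<union> (Uc c - A)"
  using assms unfolding valid_def opol_monos_def Tc_def Uc_def ind_def
  by (auto split: if_splits)

lemma K2:
  assumes "\<forall>i. c i \<le> 2" "Tc c \<subseteq> A" "A \<subseteq> Tc c \<union> Uc c"
  shows "c = (\<lambda>i. ind A i + ind (Tc c \<union> (Uc c - A)) i)"
proof
  fix i
  have "c i = 0 \<or> c i = 1 \<or> c i = 2" using assms(1)[rule_format, of i] by linarith
  then show "c i = ind A i + ind (Tc c \<union> (Uc c - A)) i"
    using assms(2,3) unfolding Tc_def Uc_def ind_def by auto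
qed

lemma fin_Xs: "finite (Xs N r)"
  by (rule finite_subset[of _ "Pow {..<N}"]) (auto simp: Xs_def)

lemma card_parts:
  assumes "finite T" "finite U" "T \<inter> U = {}" "T \<subseteq> A" "A \<subseteq> T \<union> U"
  shows "card A = card T + card (A - T)" "card (T \<union> (U - A)) = card T + card U - card (A - T)"
proof -
  have fA: "finite A" using assms finite_subset by blast
  have "A = T \<union> (A - T)" using assms by blast
  then show "card A = card T + card (A - T)"
    using fA assms by (metis card_Un_disjoint Diff_disjoint finite_Diff)
  have e: "U - A = U - (A - T)" using assms by blast
  have s: "A - T \<subseteq> U" using assms by blast
  have fAT: "finite (A - T)" using fA by simp
  have "card (U - A) = card U - card (A - T)" unfolding e by (rule card_Diff_subset[OF fAT s])
  moreover have "card (T \<union> (U - A)) = card T + card (U - A)"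
    using assms by (intro card_Un_disjoint) auto
  moreover have "card (A - T) \<le> card U" using s assms card_mono by blast
  ultimately show "card (T \<union> (U - A)) = card T + card U - card (A - T)" by simp
qed

lemma P_char:
  "(P N r s c :: 'a::field) = (if valid N c \<and> card (Tc c) \<le> r \<and> r + s = 2 * card (Tc c) + card (Uc c)
     then G (Tc c) (Uc c) (r - card (Tc c)) else 0)"
proof (cases "valid N c \<and> card (Tc c) \<le> r \<and> r + s = 2 * card (Tc c) + card (Uc c)")
  case False
  have "(P N r s c :: 'a) = 0"
    unfolding P_def
  proof (intro sum.neutral ballI)
    fix A B assume A: "A \<in> Xs N r" and B: "B \<in> Xs N s"
    show "(if c = (\<lambda>i. ind A i + ind B i) then (-1::'a) ^ invc A B else 0) = 0"
    proof (cases "c = (\<lambda>i. ind A i + ind B i)")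
      case True
      have AN: "A \<subseteq> {..<N}" "B \<subseteq> {..<N}" "card A = r" "card B = s" using A B by (auto simp: Xs_def)
      note k = K1[OF True AN(1,2)]
      have vs: "Tc c \<subseteq> {..<N}" "Uc c \<subseteq> {..<N}" using valid_sub k by auto
      have fin: "finite (Tc c)" "finite (Uc c)"
        using finite_subset[OF vs(1)] finite_subset[OF vs(2)] by auto
      have kk: "Tc c \<subseteq> A" "A \<subseteq> Tc c \<union> Uc c" "B = Tc c \<union> (Uc c - A)" using k by auto
      note cp = card_parts[OF fin TU_disj kk(1,2)]
      have "card (A - Tc c) \<le> card (Uc c)"
        using kk fin card_mono[of "Uc c" "A - Tc c"] by blast
      then have "card (Tc c) \<le> r \<and> r + s = 2 * card (Tc c) + card (Uc c)"
        using cp kk AN by simp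
      moreover have "valid N c" using k by simp
      ultimately have False using False by blast
      then show ?thesis by simp
    qed simp
  qed
  then show ?thesis by (subst if_not_P[OF False]) simp
next
  case True
  let ?T = "Tc c" and ?U = "Uc c" and ?t = "card (Tc c)"
  have val: "valid N c" and tr: "?t \<le> r" and rs: "r + s = 2 * ?t + card ?U" using True by simp_all
  have sub: "?T \<subseteq> {..<N}" "?U \<subseteq> {..<N}" using valid_sub[OF val] by auto
  have fin: "finite ?T" "finite ?U"
    using finite_subset[OF sub(1)] finite_subset[OF sub(2)] by auto
  have le2: "\<forall>i. c i \<le> 2" using val by (simp add: valid_def)
  define cond where "cond A \<longleftrightarrow> ?T \<subseteq> A \<and> A \<subseteq> ?T \<union> ?U" for A
  define g where "g A = ((-1::'a) ^ invc A (?T \<union> (?U - A)))" for A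
  have inner: "(\<Sum>B\<in>Xs N s. if c = (\<lambda>i. ind A i + ind B i) then (-1::'a) ^ invc A B else 0)
      = (if cond A then g A else 0)" if A: "A \<in> Xs N r" for A
  proof -
    have AN: "A \<subseteq> {..<N}" "card A = r" using A by (auto simp: Xs_def)
    have eqv: "(c = (\<lambda>i. ind A i + ind B i)) \<longleftrightarrow> (cond A \<and> B = ?T \<union> (?U - A))"
      if "B \<subseteq> {..<N}" for B
    proof
      assume "c = (\<lambda>i. ind A i + ind B i)"
      from K1[OF this AN(1) that] show "cond A \<and> B = ?T \<union> (?U - A)" unfolding cond_def by blast
    next
      assume h: "cond A \<and> B = ?T \<union> (?U - A)"
      then have "?T \<subseteq> A" "A \<subseteq> ?T \<union> ?U" unfolding cond_def by auto
      from K2[OF le2 this] h show "c = (\<lambda>i. ind A i + ind B i)" by simp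
    qed
    have "(\<Sum>B\<in>Xs N s. if c = (\<lambda>i. ind A i + ind B i) then (-1::'a) ^ invc A B else 0)
       = (\<Sum>B\<in>Xs N s. if B = ?T \<union> (?U - A) then (if cond A then g A else 0) else 0)"
    proof (rule sum.cong[OF refl])
      fix B assume "B \<in> Xs N s"
      then have "B \<subseteq> {..<N}" by (simp add: Xs_def)
      note e = eqv[OF this]
      show "(if c = (\<lambda>i. ind A i + ind B i) then (-1::'a) ^ invc A B else 0) =
        (if B = ?T \<union> (?U - A) then (if cond A then g A else 0) else 0)"
        unfolding e g_def by auto
    qed
    also have "\<dots> = (if ?T \<union> (?U - A) \<in> Xs N s then (if cond A then g A else 0) else 0)"
      using fin_Xs by (simp add: sum.delta')
    also have "\<dots> = (if cond A then g A else 0)"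
    proof (cases "cond A")
      case True
      have cc: "?T \<subseteq> A" "A \<subseteq> ?T \<union> ?U" using True unfolding cond_def by auto
      note cp = card_parts[OF fin TU_disj cc]
      have "card (A - ?T) \<le> card ?U"
        using cc fin card_mono[of "?U" "A - ?T"] by blast
      then have "card (?T \<union> (?U - A)) = s" using cp AN rs by simp
      moreover have "?T \<union> (?U - A) \<subseteq> {..<N}" using sub by blast
      ultimately have "?T \<union> (?U - A) \<in> Xs N s" by (simp add: Xs_def)
      then show ?thesis by simp
    qed simp
    finally show ?thesis .
  qed
  have "(P N r s c :: 'a) = (\<Sum>A\<in>Xs N r. if cond A then g A else 0)"
    unfolding P_def by (rule sum.cong[OF refl]) (rule inner)
  also have "\<dots> = (\<Sum>A\<in>{A\<in>Xs N r. cond A}. g A)"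
    by (rule sum.inter_filter[OF fin_Xs, symmetric])
  also have "\<dots> = (\<Sum>A'\<in>{A'. A' \<subseteq> ?U \<and> card A' = r - ?t}. g (?T \<union> A'))"
  proof (rule sum.reindex_bij_witness[where i = "\<lambda>A'. ?T \<union> A'" and j = "\<lambda>A. A - ?T"])
    fix A assume "A \<in> {A\<in>Xs N r. cond A}"
    then have A: "?T \<subseteq> A" "A \<subseteq> ?T \<union> ?U" "card A = r" unfolding cond_def Xs_def by auto
    note cp = card_parts[OF fin TU_disj A(1,2)]
    show "?T \<union> (A - ?T) = A" using A by blast
    show "A - ?T \<in> {A'. A' \<subseteq> ?U \<and> card A' = r - ?t}" using A cp by auto
    show "g (?T \<union> (A - ?T)) = g A" using A by (simp add: Un_absorb1 Un_Diff_cancel)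
  next
    fix A' assume "A' \<in> {A'. A' \<subseteq> ?U \<and> card A' = r - ?t}"
    then have A': "A' \<subseteq> ?U" "card A' = r - ?t" by auto
    have fA': "finite A'" using finite_subset[OF A'(1) fin(2)] .
    have dj: "?T \<inter> A' = {}" using A' TU_disj by blast
    show "?T \<union> A' - ?T = A'" using dj by blast
    have "card (?T \<union> A') = r" using card_Un_disjoint[OF fin(1) fA' dj] A' tr by simp
    then show "?T \<union> A' \<in> {A\<in>Xs N r. cond A}"
      using A' sub unfolding Xs_def cond_def by auto
  qed
  also have "\<dots> = G ?T ?U (r - ?t)"
    unfolding G_def g_def
  proof (rule sum.cong[OF refl])
    fix A' assume "A' \<in> {A'. A' \<subseteq> ?U \<and> card A' = r - ?t}"
    then have "?U - (?T \<union> A') = ?U - A'" using TU_disj by blast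
    then show "(-1::'a) ^ invc (?T \<union> A') (?T \<union> (?U - (?T \<union> A'))) = (-1) ^ invc (?T \<union> A') (?T \<union> (?U - A'))"
      by simp
  qed
  finally show ?thesis using True by simp
qed

lemma claims_c: "claims (Tc c) (Uc c) TYPE('a::field) \<or> \<not> valid N c"
proof (cases "valid N c")
  case True
  have "Tc c \<subseteq> {..<N}" "Uc c \<subseteq> {..<N}" using valid_sub[OF True] by auto
  then have "finite (Tc c \<union> Uc c)" using finite_subset by auto
  from G_claims[OF this] TU_disj show ?thesis by blast
qed simp

lemma F0:
  assumes "(P N r s c :: 'a::field) \<noteq> 0"
  shows "valid N c \<and> card (Tc c) \<le> r \<and> r + s = 2 * card (Tc c) + card (Uc c) \<and> r - card (Tc c) \<le> card (Uc c)"
proof -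
  have h: "valid N c \<and> card (Tc c) \<le> r \<and> r + s = 2 * card (Tc c) + card (Uc c)"
    and g: "(G (Tc c) (Uc c) (r - card (Tc c)) :: 'a) \<noteq> 0"
    using assms by (subst (asm) P_char, simp split: if_splits)+
  have "finite (Uc c)" using valid_sub h finite_subset by (meson finite_lessThan)
  then have "r - card (Tc c) \<le> card (Uc c)"
    using g G_big[of "Uc c" "r - card (Tc c)" "Tc c"] by (meson not_le)
  then show ?thesis using h by simp
qed

lemma FA:
  assumes "even (card (Uc c))" "odd (r - card (Tc c))"
  shows "(P N r s c :: 'a::field) = 0"
proof (rule ccontr)
  assume nz: "(P N r s c :: 'a) \<noteq> 0"
  note f = F0[OF nz]
  then have cl: "claims (Tc c) (Uc c) TYPE('a)" using claims_c[of c N] by auto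
  obtain i where i: "r - card (Tc c) = Suc (2*i)" using assms(2) oddE by (metis Suc_eq_plus1)
  have "(G (Tc c) (Uc c) (r - card (Tc c)) :: 'a) = 0" unfolding i using cl assms(1)
    by (simp add: claims_def)
  then have "(P N r s c :: 'a) = 0" using f by (subst P_char) simp
  with nz show False by simp
qed

lemma FB:
  assumes "odd (card (Uc c))" "card (Tc c) \<le> r" "even (r - card (Tc c))"
    "r + s = 2 * card (Tc c) + card (Uc c)" "1 \<le> s"
  shows "(P N (Suc r) (s - 1) c :: 'a::field) = (-1) ^ card (Tc c) * P N r s c"
proof (cases "valid N c")
  case False
  then show ?thesis by (simp add: P_char)
next
  case True
  then have cl: "claims (Tc c) (Uc c) TYPE('a)" using claims_c[of c N] by auto
  obtain i where i: "r - card (Tc c) = 2*i" using assms(3) by (metis evenE)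
  have e: "Suc r - card (Tc c) = Suc (2*i)" using i assms(2) by simp
  have "(G (Tc c) (Uc c) (Suc (2*i)) :: 'a) = (-1) ^ card (Tc c) * G (Tc c) (Uc c) (2*i)"
    using cl assms(1) by (simp add: claims_def)
  moreover have s1: "Suc r + (s - 1) = 2 * card (Tc c) + card (Uc c)" using assms(4,5) by simp
  moreover have "(P N (Suc r) (s - 1) c :: 'a) = G (Tc c) (Uc c) (Suc (2*i))"
    using True assms(2) s1 e by (subst P_char) simp
  moreover have "(P N r s c :: 'a) = G (Tc c) (Uc c) (2*i)"
    using True assms(2,4) i by (subst P_char) simp
  ultimately show ?thesis by simp
qed

lemma pairing:
  fixes f :: "nat \<Rightarrow> 'a::ring_1"
  assumes "\<And>m. odd m \<Longrightarrow> m < 2*K \<Longrightarrow> f (Suc m) = - f m"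
  shows "sum f {1..2*K} = 0"
  using assms
proof (induction K)
  case 0
  then show ?case by simp
next
  case (Suc K)
  have IH: "sum f {1..2*K} = 0" using Suc.IH Suc.prems by simp
  have "f (Suc (Suc (2*K))) = - f (Suc (2*K))" using Suc.prems[of "Suc (2*K)"] by simp
  moreover have "{1..2 * Suc K} = insert (Suc (Suc (2*K))) (insert (Suc (2*K)) {1..2*K})" by auto
  ultimately show ?case using IH by simp
qed

lemma main_c:
  fixes n p q k :: nat and c :: "nat \<Rightarrow> nat"
  assumes kn: "k \<le> n" and pqn: "p + q \<le> n"
  shows "(\<Sum>m\<in>{1..n-p-q}. (-1::'a::field)^((n+k)*(m+p+k)) * P (n+1) (n-k+m) (n-p-q-m) c) =
         (\<Sum>m\<in>{1..n-p-q}. (-1)^((n+k)*(m+q)) *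
             ((-1)^((n-k+m)*(n-p-q-m) + card (Tc c)) * P (n+1) (n-k+m) (n-p-q-m) c))"
proof -
  define N where "N = n + 1"
  define M where "M = n - p - q"
  define t where "t = card (Tc c)"
  define u where "u = card (Uc c)"
  define h where "h m = (P N (n-k+m) (n-p-q-m) c :: 'a)" for m
  define s1 where "s1 m = ((-1::'a)^((n+k)*(m+p+k)))" for m
  define s2 where "s2 m = ((-1::'a)^((n+k)*(m+q)) * (-1)^((n-k+m)*(n-p-q-m) + t))" for m
  have hz: "card (Tc c) \<le> n-k+m \<and> (n-k+m) + (n-p-q-m) = 2*t + u \<and> (n-k+m) - t \<le> u"
    if "h m \<noteq> 0" for m
    using F0[OF that[unfolded h_def]] unfolding t_def u_def by auto
  have goal: "(\<Sum>m\<in>{1..M}. s1 m * h m) = (\<Sum>m\<in>{1..M}. s2 m * h m)"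
  proof -
    consider (E) "even u" | (O1) "odd u" "even (n+k+t)" | (O2) "odd u" "odd (n+k+t)" by blast
    then show ?thesis
    proof cases
      case E
      show ?thesis
      proof (rule sum.cong[OF refl])
        fix m assume m: "m \<in> {1..M}"
        show "s1 m * h m = s2 m * h m"
        proof (cases "h m = 0")
          case False
          note z = hz[OF False]
          have ev: "even ((n-k+m) - t)"
          proof (rule ccontr)
            assume "odd ((n-k+m) - t)"
            then have "h m = 0" unfolding h_def using FA[of c "n-k+m"] E unfolding u_def t_def by blast
            with False show False by simp
          qed
          have mM: "m \<le> n - p - q" using m M_def by simp
          define r where "r = n-k+m"
          define s where "s = n-p-q-m"
          have D: "r + s + k + p + q = 2*n" unfolding r_def s_def using mM kn pqn by linarith
          have z1: "t \<le> r" "r + s = 2*t + u" using z unfolding r_def s_def t_def by auto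
          have ev': "even (r - t)" using ev unfolding r_def .
          have pr: "even r \<longleftrightarrow> even t" using ev' z1(1) by presburger
          have ps: "even s \<longleftrightarrow> even t" using pr z1(2) E by presburger
          have psig: "even (m+p+k) \<longleftrightarrow> even (m+q)" using D z1(2) E by presburger
          have "even ((n+k)*(m+p+k)) \<longleftrightarrow> even ((n+k)*(m+q) + (r*s + t))"
            using pr ps psig by (simp add: even_mult_iff)
          then have "s1 m = s2 m" unfolding s1_def s2_def power_add[symmetric] r_def[symmetric] s_def[symmetric]
            by (rule neg1_par)
          then show ?thesis by simp
        qed simp
      qed
    next
      case O1
      show ?thesis
      proof (rule sum.cong[OF refl])
        fix m assume m: "m \<in> {1..M}"
        show "s1 m * h m = s2 m * h m"
        proof (cases "h m = 0")
          case False
          note z = hz[OF False]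
          have mM: "m \<le> n - p - q" using m M_def by simp
          define r where "r = n-k+m"
          define s where "s = n-p-q-m"
          have D: "r + s + k + p + q = 2*n" unfolding r_def s_def using mM kn pqn by linarith
          have z1: "r + s = 2*t + u" using z unfolding r_def s_def t_def by auto
          have pe: "even r \<or> even s" using z1 O1(1) by presburger
          have pq: "even (m+q) \<longleftrightarrow> \<not> even (m+p+k)" using z1 D O1(1) by presburger
          have pt: "even t \<longleftrightarrow> even (n+k)" using O1(2) by presburger
          have "even ((n+k)*(m+p+k)) \<longleftrightarrow> even ((n+k)*(m+q) + (r*s + t))"
            using pe pq pt by (cases "even (n+k)"; cases "even (m+p+k)") (auto simp: even_mult_iff)
          then have "s1 m = s2 m" unfolding s1_def s2_def power_add[symmetric] r_def[symmetric] s_def[symmetric]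
            by (rule neg1_par)
          then show ?thesis by simp
        qed simp
      qed
    next
      case O2
      have neg: "s2 m * h m = - (s1 m * h m)" if m: "m \<in> {1..M}" for m
      proof (cases "h m = 0")
        case False
        note z = hz[OF False]
        have mM: "m \<le> n - p - q" using m M_def by simp
        define r where "r = n-k+m"
        define s where "s = n-p-q-m"
        have D: "r + s + k + p + q = 2*n" unfolding r_def s_def using mM kn pqn by linarith
        have z1: "r + s = 2*t + u" using z unfolding r_def s_def t_def by auto
        have pe: "even r \<or> even s" using z1 O2(1) by presburger
        have pq: "even (m+q) \<longleftrightarrow> \<not> even (m+p+k)" using z1 D O2(1) by presburger
        have pt: "even t \<longleftrightarrow> \<not> even (n+k)" using O2(2) by presburger
        have "even (Suc ((n+k)*(m+p+k))) \<longleftrightarrow> even ((n+k)*(m+q) + (r*s + t))"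
          using pe pq pt by (cases "even (n+k)"; cases "even (m+p+k)") (auto simp: even_mult_iff)
        then have "(-1::'a) ^ Suc ((n+k)*(m+p+k)) = (-1) ^ ((n+k)*(m+q) + (r*s + t))"
          by (rule neg1_par)
        then have "s2 m = - s1 m" unfolding s1_def s2_def power_add r_def[symmetric] s_def[symmetric] by simp
        then show ?thesis by simp
      qed simp
      define f where "f m = s1 m * h m" for m
      have ev: "even (n-k+m + t)" if "odd m" for m
        using that O2 kn by presburger
      have pair: "f (Suc m) = - f m" if m: "odd m" "m < M" for m
      proof -
        define r where "r = n-k+m"
        define s where "s = n-p-q-m"
        have e1: "n-k+Suc m = Suc r" unfolding r_def using kn by simp
        have e2: "n-p-q-Suc m = s - 1" unfolding s_def by simp
        have s1': "1 \<le> s" unfolding s_def using m M_def by simp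
        have evr: "even (r + t)" unfolding r_def using ev[OF m(1)] .
        have hm: "h m = P N r s c" unfolding h_def r_def s_def ..
        have hsm: "h (Suc m) = P N (Suc r) (s - 1) c" unfolding h_def e1 e2 ..
        have hs: "h (Suc m) = (-1)^t * h m"
        proof (cases "t \<le> r \<and> r + s = 2*t + u")
          case True
          have "even (r - t)" using evr True by presburger
          then show ?thesis unfolding hm hsm
            using FB[of c r s N] O2(1) True s1' unfolding t_def u_def by simp
        next
          case False
          have h0: "h m = 0"
          proof (rule ccontr)
            assume "h m \<noteq> 0"
            then have "t \<le> r \<and> r + s = 2*t + u" using hz[of m] unfolding r_def s_def t_def by auto
            with False show False by simp
          qed
          have "h (Suc m) = 0"
          proof (rule ccontr)
            assume "h (Suc m) \<noteq> 0"
            then have z: "t \<le> Suc r" "Suc r + (s - 1) = 2*t + u"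
              using hz[of "Suc m"] unfolding e1 e2 t_def by auto
            have "r + s = 2*t + u" using z(2) s1' by simp
            then have "t = Suc r" using False z(1) by simp
            then show False using evr by simp
          qed
          then show ?thesis using h0 by simp
        qed
        have "s1 (Suc m) = s1 m * (-1)^(n+k)"
        proof -
          have "(n+k)*(Suc m+p+k) = (n+k)*(m+p+k) + (n+k)" by (simp add: algebra_simps)
          then show ?thesis unfolding s1_def by (simp add: power_add)
        qed
        moreover have "(-1::'a)^(n+k) * (-1)^t = -1"
          unfolding power_add[symmetric] using O2 by simp
        ultimately show ?thesis unfolding f_def hs
          by (metis (no_types, lifting) mult.assoc mult.left_commute mult_minus1 mult_minus_left)
      qed
      have fsum: "sum f {1..M} = 0"
      proof (cases "even M")
        case True
        then obtain K where K: "M = 2*K" by blast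
        have "sum f {1..2*K} = 0"
        proof (rule pairing)
          fix m :: nat assume "odd m" "m < 2*K"
          then show "f (Suc m) = - f m" using pair K by simp
        qed
        then show ?thesis using K by simp
      next
        case False
        then obtain K where K: "M = Suc (2*K)" by (metis oddE Suc_eq_plus1)
        have "h M = 0"
        proof (rule ccontr)
          assume "h M \<noteq> 0"
          note z = hz[OF this]
          have s0: "n-p-q-M = 0" using M_def by simp
          define r where "r = n-k+M"
          have z': "t \<le> r" "r = 2*t + u" "r - t \<le> u" using z s0 unfolding r_def t_def by auto
          have "even (r + t)" unfolding r_def using ev[of M] False by simp
          then show False using z' O2(1) by presburger
        qed
        then have fM: "f M = 0" unfolding f_def by simp
        have "{1..M} = insert M {1..2*K}" using K by auto
        moreover have "sum f {1..2*K} = 0"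
        proof (rule pairing)
          fix m :: nat assume "odd m" "m < 2*K"
          then show "f (Suc m) = - f m" using pair K by simp
        qed
        ultimately show ?thesis using fM K by simp
      qed
      have "(\<Sum>m\<in>{1..M}. s2 m * h m) = (\<Sum>m\<in>{1..M}. - f m)"
        using neg unfolding f_def by (intro sum.cong) auto
      also have "\<dots> = - sum f {1..M}" by (simp add: sum_negf)
      finally show ?thesis using fsum unfolding f_def by simp
    qed
  qed
  then show ?thesis
    unfolding s1_def s2_def h_def N_def M_def t_def
    by (simp add: mult.assoc)
qed

theorem mainTheorem8:
  fixes n p q k :: nat
  assumes "p \<le> n" and "q \<le> n" and "k \<le> n" and "p + q \<le> n"
    and "(2::'a::field) \<noteq> 0"
  shows "opol_sum (\<lambda>m. opol_smult ((-1::'a) ^ ((n + k) * (m + p + k)))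
            (opol_mult (n + 1) (elem_sym (n + 1) (n - k + m)) (elem_sym (n + 1) (n - p - q - m))))
          {1..n - p - q}
       = opol_sum (\<lambda>m. opol_smult ((-1::'a) ^ ((n + k) * (m + q)))
            (opol_mult (n + 1) (elem_sym (n + 1) (n - p - q - m)) (elem_sym (n + 1) (n - k + m))))
          {1..n - p - q}"
proof (rule ext)
  fix c
  have "(\<Sum>m\<in>{1..n-p-q}. (-1::'a)^((n+k)*(m+q)) * P (n+1) (n-p-q-m) (n-k+m) c) =
        (\<Sum>m\<in>{1..n-p-q}. (-1)^((n+k)*(m+q)) *
             ((-1)^((n-k+m)*(n-p-q-m) + card (Tc c)) * P (n+1) (n-k+m) (n-p-q-m) c))"
  proof (rule sum.cong[OF refl])
    fix m
    show "(-1::'a)^((n+k)*(m+q)) * P (n+1) (n-p-q-m) (n-k+m) c =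
        (-1)^((n+k)*(m+q)) * ((-1)^((n-k+m)*(n-p-q-m) + card (Tc c)) * P (n+1) (n-k+m) (n-p-q-m) c)"
      using P_swap[of "n+1" "n-p-q-m" "n-k+m" c] unfolding Tc_def by simp
  qed
  then show "opol_sum (\<lambda>m. opol_smult ((-1::'a) ^ ((n + k) * (m + p + k)))
            (opol_mult (n + 1) (elem_sym (n + 1) (n - k + m)) (elem_sym (n + 1) (n - p - q - m))))
          {1..n - p - q} c
       = opol_sum (\<lambda>m. opol_smult ((-1::'a) ^ ((n + k) * (m + q)))
            (opol_mult (n + 1) (elem_sym (n + 1) (n - p - q - m)) (elem_sym (n + 1) (n - k + m))))
          {1..n - p - q} c"
    unfolding mult_elem opol_smult_def opol_sum_def
    using main_c[OF assms(3,4), of c] by simp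
qed

end
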